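(* Let $d\in\mathbb{N}$ and $M(t)=t\log(e+t)$, $t>0$. There is a constant $c_d$ depending only on $d$ such that for every measurable $f$ on $\mathbb{R}^d\setminus\mathbb{B}^d$, $$\int_{\mathbb{R}^d\setminus\mathbb{B}^d}|f(s)|\log(1+|s|)ds\leq c_d\|Vf\|_{L_M(\mathbb{B}^d)}.$$
   Context: $\mathbb{B}^d$ is the unit ball in $\mathbb{R}^d$; all spaces carry Lebesgue measure. $(Vf)(t)=|t|^{-2d}f(t/|t|^2)$. For a measurable set $\Omega$, $\|g\|_{L_M(\Omega)}=\inf\{\lambda>0:\int_\Omega M(|g|/\lambda)\le1\}$. *)

theory Defs
  imports "HOL-Analysis.Analysis"
begin

text \<open>Young function M(t) = t log(e + t).\<close>
definition Mlog :: "real \<Rightarrow> real" where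
  "Mlog t = t * ln (exp 1 + t)"

text \<open>Inversion operator (V f)(t) = |t|^(-2d) f(t / |t|^2), d = DIM('a).\<close>
definition Vop :: "('a::euclidean_space \<Rightarrow> real) \<Rightarrow> 'a \<Rightarrow> real" where
  "Vop f t = norm t powr (- 2 * real DIM('a)) * f (t /\<^sub>R (norm t)\<^sup>2)"

text \<open>Luxemburg norm in L_M(Omega) w.r.t. Lebesgue measure; value in ennreal,
  the infimum of the empty set being \<infinity>.\<close>
definition luxemburg_norm ::
  "(real \<Rightarrow> real) \<Rightarrow> 'a::euclidean_space set \<Rightarrow> ('a \<Rightarrow> real) \<Rightarrow> ennreal" where
  "luxemburg_norm M \<Omega> g =
     (INF r \<in> {r::real. r > 0 \<and>
         (\<integral>\<^sup>+ x \<in> \<Omega>. ennreal (M (\<bar>g x\<bar> / r)) \<partial>lebesgue) \<le> 1}. ennreal r)"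

end

theory Submission
  imports Defs
begin

typedef (overloaded) ('a::euclidean_space) bidx = "Basis :: 'a set"
  using nonempty_Basis by blast

instance bidx :: (euclidean_space) finite
proof
  have "UNIV = Abs_bidx ` (Basis :: 'a set)"
    using type_definition.Abs_image[OF type_definition_bidx] by metis
  then show "finite (UNIV :: 'a bidx set)" by (metis finite_Basis finite_imageI)
qed

instantiation bidx :: (euclidean_space) linorder
begin
definition less_eq_bidx :: "'a bidx \<Rightarrow> 'a bidx \<Rightarrow> bool" where
  "less_eq_bidx x y \<longleftrightarrow> to_nat x \<le> to_nat y"
definition less_bidx :: "'a bidx \<Rightarrow> 'a bidx \<Rightarrow> bool" where
  "less_bidx x y \<longleftrightarrow> to_nat x < to_nat y"
instance
  by standard (auto simp: less_eq_bidx_def less_bidx_def)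
end

instance bidx :: (euclidean_space) wellorder
proof
  fix P :: "'a bidx \<Rightarrow> bool" and a
  assume H: "\<And>x. (\<And>y. y < x \<Longrightarrow> P y) \<Longrightarrow> P x"
  have "\<forall>x. to_nat x = n \<longrightarrow> P x" for n
  proof (induction n rule: less_induct)
    case (less n)
    show ?case using H less by (auto simp: less_bidx_def)
  qed
  then show "P a" by blast
qed

definition Tm :: "real^('a::euclidean_space bidx) \<Rightarrow> 'a" where
  "Tm v = (\<Sum>i\<in>UNIV. (v $ i) *\<^sub>R Rep_bidx i)"

definition Pm :: "'a::euclidean_space \<Rightarrow> real^('a bidx)" where
  "Pm x = (\<chi> i. x \<bullet> Rep_bidx i)"

lemma Rep_bidx_Basis: "Rep_bidx i \<in> Basis"
  using Rep_bidx by blast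

lemma range_Rep_bidx: "range Rep_bidx = (Basis :: 'a::euclidean_space set)"
  using type_definition.Rep_range[OF type_definition_bidx] by metis

lemma sum_bidx: "(\<Sum>i\<in>UNIV. g (Rep_bidx i)) = (\<Sum>b\<in>(Basis::'a::euclidean_space set). g b)"
proof -
  have "(\<Sum>b\<in>(Basis::'a set). g b) = (\<Sum>b\<in>range Rep_bidx. g b)" by (simp add: range_Rep_bidx)
  also have "\<dots> = (\<Sum>i\<in>UNIV. g (Rep_bidx i))"
    by (subst sum.reindex) (auto simp: inj_def Rep_bidx_inject)
  finally show ?thesis by simp
qed

lemma Tm_inner: "Tm v \<bullet> Rep_bidx j = v $ j"
proof -
  have "Tm v \<bullet> Rep_bidx j = (\<Sum>i\<in>UNIV. (v $ i) * (Rep_bidx i \<bullet> Rep_bidx j))"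
    by (simp add: Tm_def inner_sum_left)
  also have "\<dots> = (\<Sum>i\<in>UNIV. if i = j then v $ j else 0)"
    by (rule sum.cong) (auto simp: inner_Basis Rep_bidx_Basis Rep_bidx_inject)
  finally show ?thesis by simp
qed

lemma Pm_Tm: "Pm (Tm v) = v"
  by (simp add: Pm_def Tm_inner vec_eq_iff)

lemma Tm_Pm: "Tm (Pm x) = x"
proof -
  have "Tm (Pm x) = (\<Sum>i\<in>UNIV. (x \<bullet> Rep_bidx i) *\<^sub>R Rep_bidx i)"
    by (simp add: Tm_def Pm_def)
  also have "\<dots> = (\<Sum>b\<in>Basis. (x \<bullet> b) *\<^sub>R b)"
    by (rule sum_bidx)
  also have "\<dots> = x" by (rule euclidean_representation)
  finally show ?thesis .
qed

lemma linear_Tm: "linear Tm"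
  unfolding Tm_def by (rule linearI) (simp_all add: scaleR_add_left sum.distrib scaleR_sum_right)

lemma linear_Pm: "linear Pm"
  unfolding Pm_def by (rule linearI) (simp_all add: vec_eq_iff inner_add_left)

lemma inner_Pm: "Pm x \<bullet> Pm y = x \<bullet> y"
proof -
  have "Pm x \<bullet> Pm y = (\<Sum>i\<in>UNIV. (x \<bullet> Rep_bidx i) * (y \<bullet> Rep_bidx i))"
    by (simp add: Pm_def inner_vec_def)
  also have "\<dots> = (\<Sum>b\<in>Basis. (x \<bullet> b) * (y \<bullet> b))"
    by (rule sum_bidx)
  also have "\<dots> = x \<bullet> y" by (rule euclidean_inner[symmetric])
  finally show ?thesis .
qed

lemma norm_Pm: "norm (Pm x) = norm x"
  by (simp add: norm_eq_sqrt_inner inner_Pm)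

lemma norm_Tm: "norm (Tm v) = norm v"
  by (metis norm_Pm Pm_Tm)

lemma card_bidx: "CARD('a::euclidean_space bidx) = DIM('a)"
proof -
  have "CARD('a bidx) = card (range (Rep_bidx :: 'a bidx \<Rightarrow> 'a))"
    by (simp add: card_image inj_def Rep_bidx_inject)
  then show ?thesis by (simp add: range_Rep_bidx)
qed

lemma vimage_Tm_box: "Tm -` box l u = box (Pm l) (Pm u)"
proof -
  have "x \<in> box l u \<longleftrightarrow> (\<forall>i. l \<bullet> Rep_bidx i < x \<bullet> Rep_bidx i \<and> x \<bullet> Rep_bidx i < u \<bullet> Rep_bidx i)" for x
    unfolding mem_box by (metis range_Rep_bidx rangeE rangeI)
  then show ?thesis
    by (auto simp: mem_box_cart Pm_def Tm_inner)
qed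


lemma prod_bidx: "(\<Prod>i\<in>UNIV. g (Rep_bidx i)) = (\<Prod>b\<in>(Basis::'a::euclidean_space set). g b)"
proof -
  have "(\<Prod>b\<in>(Basis::'a set). g b) = (\<Prod>b\<in>range Rep_bidx. g b)" by (simp add: range_Rep_bidx)
  also have "\<dots> = (\<Prod>i\<in>UNIV. g (Rep_bidx i))"
    by (subst prod.reindex) (auto simp: inj_def Rep_bidx_inject)
  finally show ?thesis by simp
qed

lemma Tm_borel[measurable]: "Tm \<in> borel_measurable borel"
  by (intro borel_measurable_continuous_onI linear_continuous_on) 
     (simp add: linear_Tm linear_conv_bounded_linear[symmetric])

lemma Pm_borel[measurable]: "Pm \<in> borel_measurable borel"
  by (intro borel_measurable_continuous_onI linear_continuous_on) 
     (simp add: linear_Pm linear_conv_bounded_linear[symmetric])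

lemma lborel_Tm: "lborel = distr lborel borel (Tm :: real^('a::euclidean_space bidx) \<Rightarrow> 'a)"
proof (rule lborel_eqI)
  fix l u :: 'a
  assume le: "\<And>b. b \<in> Basis \<Longrightarrow> l \<bullet> b \<le> u \<bullet> b"
  have "emeasure (distr lborel borel (Tm :: real^('a bidx) \<Rightarrow> 'a)) (box l u) = emeasure lborel (box (Pm l) (Pm u))"
    by (simp add: emeasure_distr vimage_Tm_box)
  also have "\<dots> = (\<Prod>k\<in>(Basis :: (real^('a bidx)) set). (Pm u - Pm l) \<bullet> k)"
    using le by (auto simp: emeasure_lborel_box_eq Basis_vec_def Pm_def inner_axis Rep_bidx_Basis inner_diff_left)
  also have "\<dots> = (\<Prod>i\<in>UNIV. (Pm u - Pm l) $ i)"
    by (simp add: Basis_vec_def UNION_singleton_eq_range prod.reindex axis_eq_axis inj_on_def inner_axis)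
  also have "\<dots> = (\<Prod>i\<in>UNIV. (u - l) \<bullet> Rep_bidx i)"
    by (simp add: Pm_def inner_diff_left)
  also have "\<dots> = (\<Prod>b\<in>Basis. (u - l) \<bullet> b)"
    using prod_bidx[of "\<lambda>b. (u - l) \<bullet> b"] by simp
  finally show "emeasure (distr lborel borel (Tm :: real^('a bidx) \<Rightarrow> 'a)) (box l u) = (\<Prod>b\<in>Basis. (u - l) \<bullet> b)" .
qed simp


lemma distr_lebesgue_Tm: "distr lebesgue lborel (Tm :: real^('a::euclidean_space bidx) \<Rightarrow> 'a) = lborel"
proof -
  have "distr lebesgue lborel (Tm :: real^('a bidx) \<Rightarrow> 'a) = distr lborel lborel Tm"
    by (simp add: distr_completion)
  also have "\<dots> = distr lborel borel Tm"
    by (rule distr_cong) auto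
  finally show ?thesis using lborel_Tm by metis
qed

lemma Tm_lebesgue: "Tm \<in> lebesgue \<rightarrow>\<^sub>M (lebesgue :: 'a::euclidean_space measure)"
proof -
  have eq: "null_sets lborel = null_sets (distr lebesgue lborel (Tm :: real^('a bidx) \<Rightarrow> 'a))"
    by (simp add: distr_lebesgue_Tm)
  show ?thesis
    by (simp add: completion.measurable_completion2 eq measurable_completion)
qed

lemma lebesgue_Tm: "(lebesgue :: 'a::euclidean_space measure) = distr lebesgue lebesgue (Tm :: real^('a bidx) \<Rightarrow> 'a)"
proof -
  have eq: "null_sets (distr lebesgue lborel (Tm :: real^('a bidx) \<Rightarrow> 'a)) = null_sets lborel"
    by (simp add: distr_lebesgue_Tm)
  have "(lebesgue :: 'a measure) = completion (distr lebesgue lborel (Tm :: real^('a bidx) \<Rightarrow> 'a))"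
    by (simp add: distr_lebesgue_Tm)
  also have "\<dots> = distr lebesgue (completion lborel) Tm"
    by (rule completion.completion_distr_eq) (auto simp: eq measurable_completion)
  finally show ?thesis by simp
qed

lemma nn_integral_Tm:
  fixes g :: "'a::euclidean_space \<Rightarrow> ennreal"
  assumes "g \<in> borel_measurable lebesgue"
  shows "(\<integral>\<^sup>+x. g x \<partial>lebesgue) = (\<integral>\<^sup>+v. g (Tm v) \<partial>(lebesgue :: (real^('a bidx)) measure))"
proof -
  have "(\<integral>\<^sup>+x. g x \<partial>lebesgue) = (\<integral>\<^sup>+x. g x \<partial>distr lebesgue lebesgue (Tm :: real^('a bidx) \<Rightarrow> 'a))"
    by (subst lebesgue_Tm) (rule refl)
  also have "\<dots> = (\<integral>\<^sup>+v. g (Tm v) \<partial>lebesgue)"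
    by (rule nn_integral_distr[OF Tm_lebesgue]) (simp add: assms)
  finally show ?thesis .
qed

definition ivt :: "'a::euclidean_space \<Rightarrow> 'a" where
  "ivt x = x /\<^sub>R (norm x)\<^sup>2"

lemma ivt_0[simp]: "ivt 0 = 0" by (simp add: ivt_def)

lemma norm_ivt: "norm (ivt x) = inverse (norm x)"
  by (cases "x = 0") (simp_all add: ivt_def power2_eq_square)

lemma ivt_ivt[simp]: "ivt (ivt x) = x"
  by (cases "x = 0") (simp_all add: ivt_def norm_ivt[unfolded ivt_def] power2_eq_square field_simps)

lemma ivt_eq_0_iff[simp]: "ivt x = 0 \<longleftrightarrow> x = 0"
  by (metis ivt_0 ivt_ivt)

lemma Tm_ivt: "Tm (ivt v) = ivt (Tm v)"
  by (simp add: ivt_def norm_Tm linear_cmul[OF linear_Tm])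

lemma has_derivative_ivt:
  fixes x :: "'a::euclidean_space"
  assumes "x \<noteq> 0"
  shows "(ivt has_derivative (\<lambda>h. h /\<^sub>R (norm x)\<^sup>2 - (2 * (x \<bullet> h) / (norm x)^4) *\<^sub>R x)) (at x)"
proof -
  have "((\<lambda>x. inverse (x \<bullet> x) *\<^sub>R x) has_derivative (\<lambda>h. h /\<^sub>R (norm x)\<^sup>2 - (2 * (x \<bullet> h) / (norm x)^4) *\<^sub>R x)) (at x)"
    using assms
    apply (auto intro!: derivative_eq_intros ext)
    by (simp add: power2_norm_eq_inner[symmetric] inner_commute field_simps power2_eq_square power4_eq_xxxx)
  then show ?thesis
    by (simp add: ivt_def[abs_def] power2_norm_eq_inner divide_inverse_commute)
qed


lemma image_ivt: "ivt ` B = {t. ivt t \<in> B}"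
  by (auto simp: image_iff) (metis ivt_ivt)

lemma meas_ivt:
  fixes h :: "'a::euclidean_space \<Rightarrow> real"
  assumes "h \<in> borel_measurable lebesgue"
  shows "(\<lambda>t. h (ivt t)) \<in> borel_measurable lebesgue"
  unfolding borel_measurable_lebesgue_preimage_borel
proof (intro allI impI)
  fix U :: "real set" assume U: "U \<in> sets borel"
  let ?A = "{s. h s \<in> U}"
  have A: "?A \<in> sets lebesgue"
    using assms U by (auto simp: borel_measurable_lebesgue_preimage_borel)
  have eq: "{t. h (ivt t) \<in> U} = ivt ` (?A - {0}) \<union> (?A \<inter> {0})"
    by (auto simp: image_ivt)
  have "ivt differentiable_on (?A - {0})"
    unfolding differentiable_on_def
    by (metis DiffD2 differentiable_at_withinI differentiable_def has_derivative_ivt singletonI)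
  then have "ivt ` (?A - {0}) \<in> sets lebesgue"
    using A by (intro differentiable_image_in_sets_lebesgue) auto
  moreover have "?A \<inter> {0} \<in> sets lebesgue"
    using A by auto
  ultimately show "{t. h (ivt t) \<in> U} \<in> sets lebesgue"
    unfolding eq by auto
qed

definition Qr :: "real^'n \<Rightarrow> real^'n \<Rightarrow> real^'n" where
  "Qr x h = h - (2 * (x \<bullet> h) / (norm x)\<^sup>2) *\<^sub>R x"

lemma orth_Qr:
  fixes x :: "real^'n"
  assumes "x \<noteq> 0"
  shows "orthogonal_transformation (Qr x)"
  unfolding orthogonal_transformation
proof
  show "linear (Qr x)"
  proof (rule linearI)
    fix a b :: "real^'n" and c :: real
    show "Qr x (a + b) = Qr x a + Qr x b"
      unfolding Qr_def by (simp add: inner_add_right add_divide_distrib distrib_left scaleR_add_left)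
    show "Qr x (c *\<^sub>R a) = c *\<^sub>R Qr x a"
      unfolding Qr_def by (simp add: scaleR_diff_right)
  qed
  show "\<forall>v. norm (Qr x v) = norm v"
  proof
    fix v
    define c where "c = 2 * (x \<bullet> v) / (norm x)\<^sup>2"
    have n: "(norm x)\<^sup>2 = x \<bullet> x" by (simp add: power2_norm_eq_inner)
    have "Qr x v \<bullet> Qr x v = v \<bullet> v - 2 * c * (x \<bullet> v) + c * c * (x \<bullet> x)"
      unfolding Qr_def c_def[symmetric] by (simp add: inner_diff_left inner_diff_right inner_commute algebra_simps)
    also have "\<dots> = v \<bullet> v"
      using assms unfolding c_def n by (simp add: field_simps)
    finally have "Qr x v \<bullet> Qr x v = v \<bullet> v" .
    then show "norm (Qr x v) = norm v"
      by (simp add: norm_eq_sqrt_inner)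
  qed
qed

lemma det_ivt:
  fixes x :: "real^'n"
  assumes "x \<noteq> 0"
  shows "\<bar>det (matrix (\<lambda>h. h /\<^sub>R (norm x)\<^sup>2 - (2 * (x \<bullet> h) / (norm x)^4) *\<^sub>R x))\<bar>
           = norm x powr (- 2 * real CARD('n))"
proof -
  have eq: "(\<lambda>h. h /\<^sub>R (norm x)\<^sup>2 - (2 * (x \<bullet> h) / (norm x)^4) *\<^sub>R x) = (*\<^sub>R) (inverse ((norm x)\<^sup>2)) \<circ> Qr x"
    using assms by (auto simp: Qr_def fun_eq_iff algebra_simps power4_eq_xxxx power2_eq_square divide_inverse)
  have lin: "linear (Qr x)" using orth_Qr[OF assms] orthogonal_transformation by blast
  have "matrix ((*\<^sub>R) (inverse ((norm x)\<^sup>2)) \<circ> Qr x) = matrix ((*\<^sub>R) (inverse ((norm x)\<^sup>2))) ** matrix (Qr x)"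
    by (rule matrix_compose[OF lin]) (simp add: linear_scaleR)
  then have "\<bar>det (matrix ((*\<^sub>R) (inverse ((norm x)\<^sup>2)) \<circ> Qr x))\<bar> = \<bar>inverse ((norm x)\<^sup>2) ^ CARD('n)\<bar>"
    using orth_Qr[OF assms] by (simp add: det_mul abs_mult)
  also have "\<dots> = norm x powr (- 2 * real CARD('n))"
  proof -
    have p: "0 < norm x" using assms by simp
    have "\<bar>inverse ((norm x)\<^sup>2) ^ CARD('n)\<bar> = inverse (norm x ^ (2 * CARD('n)))"
      by (simp add: power_inverse power_mult)
    also have "\<dots> = inverse (norm x powr (real (2 * CARD('n))))"
      using powr_realpow[OF p, symmetric] by metis
    also have "\<dots> = norm x powr (- 2 * real CARD('n))"
      by (simp add: powr_minus[symmetric])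
    finally show ?thesis .
  qed
  finally show ?thesis using eq by simp
qed


lemma nn_set_eq:
  fixes f :: "'a::euclidean_space \<Rightarrow> real"
  assumes "f absolutely_integrable_on S" "\<And>x. x \<in> S \<Longrightarrow> 0 \<le> f x"
  shows "(\<integral>\<^sup>+x. ennreal (indicator S x * f x) \<partial>lebesgue) = ennreal (integral S f)"
proof -
  have i: "integrable lebesgue (\<lambda>x. indicator S x * f x)"
    using assms(1) by (simp add: set_integrable_def)
  have "(\<integral>\<^sup>+x. ennreal (indicator S x * f x) \<partial>lebesgue) = ennreal (\<integral>x. indicator S x * f x \<partial>lebesgue)"
    by (rule nn_integral_eq_integral[OF i]) (auto simp: indicator_def assms(2))
  also have "(\<integral>x. indicator S x * f x \<partial>lebesgue) = integral S f"
    using set_lebesgue_integral_eq_integral(2)[OF assms(1)] by (simp add: set_lebesgue_integral_def)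
  finally show ?thesis .
qed

lemma meas_norm_powr: "(\<lambda>t::'a::euclidean_space. norm t powr c) \<in> borel_measurable lebesgue"
  by (intro measurable_completion) measurable

lemma covN:
  fixes h :: "real^'n::{finite,wellorder} \<Rightarrow> real"
  assumes h0: "\<And>s. 0 \<le> h s" and hm: "h \<in> borel_measurable lebesgue"
  shows "(\<integral>\<^sup>+s. ennreal (indicator (-ball 0 1) s * h s) \<partial>lebesgue)
     \<le> (\<integral>\<^sup>+t. ennreal (indicator (cball 0 1 - {0}) t * (norm t powr (-2 * real CARD('n)) * h (ivt t))) \<partial>lebesgue)"
    (is "?L \<le> ?R")
proof (cases "?R = \<infinity>")
  case True then show ?thesis by simp
next
  case False
  let ?S = "cball 0 1 - {0} :: (real^'n::{finite,wellorder}) set"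
  let ?D = "\<lambda>x::real^'n::{finite,wellorder}. \<lambda>h. h /\<^sub>R (norm x)\<^sup>2 - (2 * (x \<bullet> h) / (norm x)^4) *\<^sub>R x"
  let ?G = "\<lambda>t::real^'n::{finite,wellorder}. norm t powr (-2 * real CARD('n)) * h (ivt t)"
  have S: "?S \<in> sets lebesgue" by auto
  have der: "\<And>x. x \<in> ?S \<Longrightarrow> (ivt has_derivative ?D x) (at x within ?S)"
    by (auto intro: has_derivative_at_withinI has_derivative_ivt)
  have inj: "inj_on ivt ?S" by (metis ivt_ivt inj_on_inverseI)
  have img: "ivt ` ?S = -ball 0 1"
  proof -
    have "t \<in> ivt ` ?S \<longleftrightarrow> t \<in> -ball 0 1" for t :: "real^'n::{finite,wellorder}"
      by (cases "t = 0") (auto simp: image_ivt norm_ivt inverse_le_1_iff)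
    then show ?thesis by blast
  qed
  have Gm: "(\<lambda>t. indicator ?S t * ?G t) \<in> borel_measurable lebesgue"
    using meas_ivt[OF hm] S meas_norm_powr by (intro borel_measurable_times borel_measurable_indicator) auto
  have G0: "0 \<le> ?G t" for t using h0 by simp
  have Gint: "integrable lebesgue (\<lambda>t. indicator ?S t * ?G t)"
  proof (rule integrableI_bounded[OF Gm])
    have "(\<integral>\<^sup>+ x. ennreal (norm (indicator ?S x * ?G x)) \<partial>lebesgue) = ?R"
      using h0 by (intro nn_integral_cong) (simp add: abs_mult)
    then show "(\<integral>\<^sup>+ x. ennreal (norm (indicator ?S x * ?G x)) \<partial>lebesgue) < \<infinity>"
      using False by (simp add: top.not_eq_extremum)
  qed
  then have GS: "?G absolutely_integrable_on ?S" by (simp add: set_integrable_def)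
  define F where "F = (\<lambda>s. vec (h s) :: real^1)"
  have eqS: "(\<bar>det (matrix (?D x))\<bar> *\<^sub>R F (ivt x)) $ 1 = ?G x" if "x \<in> ?S" for x
    using that det_ivt[of x] by (simp add: F_def)
  have "(\<lambda>x. \<bar>det (matrix (?D x))\<bar> *\<^sub>R F (ivt x)) absolutely_integrable_on ?S"
    unfolding absolutely_integrable_on_1_iff
    using GS by (subst set_integrable_cong[OF refl refl eqS]) auto
  with has_absolute_integral_change_of_variables[OF S der inj, of F "integral ?S (\<lambda>x. \<bar>det (matrix (?D x))\<bar> *\<^sub>R F (ivt x))"]
  have F1: "F absolutely_integrable_on (-ball 0 1)"
    and F2: "integral (-ball 0 1) F = integral ?S (\<lambda>x. \<bar>det (matrix (?D x))\<bar> *\<^sub>R F (ivt x))"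
    by (auto simp: img)
  have h1: "h absolutely_integrable_on (-ball 0 1)"
    using F1 by (simp add: absolutely_integrable_on_1_iff F_def)
  have e1: "integral (-ball 0 1) F = vec (integral (-ball 0 1) h)"
    by (simp add: integral_on_1_eq F_def)
  have e2: "integral ?S (\<lambda>x. \<bar>det (matrix (?D x))\<bar> *\<^sub>R F (ivt x)) = vec (integral ?S ?G)"
    by (subst integral_on_1_eq) (intro arg_cong[where f=vec] integral_cong eqS)
  have ieq: "integral (-ball 0 1) h = integral ?S ?G"
    using F2 unfolding e1 e2 by (simp only: vec_inj)
  have "?L = ennreal (integral (-ball 0 1) h)"
    by (rule nn_set_eq[OF h1 h0])
  also have "\<dots> = ennreal (integral ?S ?G)" by (simp add: ieq)
  also have "\<dots> = ?R"
    by (rule nn_set_eq[OF GS G0, symmetric])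
  finally show ?thesis by simp
qed


lemma covA:
  fixes h :: "'a::euclidean_space \<Rightarrow> real"
  assumes h0: "\<And>s. 0 \<le> h s" and hm: "h \<in> borel_measurable lebesgue"
  shows "(\<integral>\<^sup>+s. ennreal (indicator (-ball 0 1) s * h s) \<partial>lebesgue)
     \<le> (\<integral>\<^sup>+t. ennreal (indicator (cball 0 1 - {0}) t * (norm t powr (-2 * real DIM('a)) * h (ivt t))) \<partial>lebesgue)"
proof -
  let ?h = "\<lambda>v::real^('a bidx). h (Tm v)"
  have hm': "?h \<in> borel_measurable lebesgue"
    using measurable_compose[OF Tm_lebesgue hm] by (simp add: comp_def)
  have ind1: "indicator (-ball 0 1) (Tm v) = (indicator (-ball 0 1) v :: real)" for v :: "real^('a bidx)"
    by (simp add: indicator_def norm_Tm)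
  have ind2: "indicator (cball 0 1 - {0}) (Tm v) = (indicator (cball 0 1 - {0}) v :: real)" for v :: "real^('a bidx)"
  proof -
    have "Tm v = 0 \<longleftrightarrow> v = 0" by (metis norm_Tm norm_eq_zero)
    then show ?thesis by (simp add: indicator_def norm_Tm)
  qed
  have m1: "(\<lambda>s. ennreal (indicator (-ball 0 1) s * h s)) \<in> borel_measurable lebesgue"
    by (intro measurable_compose[OF _ measurable_ennreal] borel_measurable_times borel_measurable_indicator hm) auto
  have m2: "(\<lambda>t. ennreal (indicator (cball 0 1 - {0}) t * (norm t powr (-2 * real DIM('a)) * h (ivt t)))) \<in> borel_measurable lebesgue"
    by (intro measurable_compose[OF _ measurable_ennreal] borel_measurable_times borel_measurable_indicator meas_ivt[OF hm] meas_norm_powr) auto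
  have "(\<integral>\<^sup>+s. ennreal (indicator (-ball 0 1) s * h s) \<partial>lebesgue)
      = (\<integral>\<^sup>+v. ennreal (indicator (-ball 0 1) (Tm v) * h (Tm v)) \<partial>(lebesgue :: (real^('a bidx)) measure))"
    by (rule nn_integral_Tm[OF m1])
  also have "\<dots> = (\<integral>\<^sup>+v. ennreal (indicator (-ball 0 1) v * ?h v) \<partial>lebesgue)"
    by (simp add: ind1)
  also have "\<dots> \<le> (\<integral>\<^sup>+t. ennreal (indicator (cball 0 1 - {0}) t * (norm t powr (-2 * real CARD('a bidx)) * ?h (ivt t))) \<partial>lebesgue)"
    by (rule covN[OF h0 hm'])
  also have "\<dots> = (\<integral>\<^sup>+v. ennreal (indicator (cball 0 1 - {0}) (Tm v) * (norm (Tm v) powr (-2 * real DIM('a)) * h (ivt (Tm v)))) \<partial>lebesgue)"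
    by (simp add: ind2 norm_Tm Tm_ivt card_bidx)
  also have "\<dots> = (\<integral>\<^sup>+t. ennreal (indicator (cball 0 1 - {0}) t * (norm t powr (-2 * real DIM('a)) * h (ivt t))) \<partial>lebesgue)"
    by (rule nn_integral_Tm[OF m2, symmetric])
  finally show ?thesis .
qed

lemma Mlog_nonneg: "0 \<le> a \<Longrightarrow> 0 \<le> Mlog a"
  unfolding Mlog_def
  by (intro mult_nonneg_nonneg) (auto intro!: ln_ge_zero simp: add_increasing2 order_trans[OF _ exp_ge_add_one_self])

lemma young:
  fixes a b :: real
  assumes a: "0 \<le> a" and b: "0 \<le> b"
  shows "a * b \<le> 4 * (Mlog a + exp (b / 2))"
proof (cases "b / 4 \<le> ln (exp 1 + a)")
  case True
  have "a * b \<le> a * (4 * ln (exp 1 + a))"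
    using True a by (intro mult_left_mono) auto
  also have "\<dots> = 4 * Mlog a" by (simp add: Mlog_def)
  also have "\<dots> \<le> 4 * (Mlog a + exp (b / 2))" by simp
  finally show ?thesis .
next
  case False
  have pos: "0 < exp 1 + a" using a by (simp add: add_pos_nonneg)
  have "exp 1 + a < exp (b / 4)"
    using False pos by (metis exp_less_mono exp_ln not_le)
  then have a1: "a \<le> exp (b / 4)" by (smt (verit) exp_gt_zero)
  have b1: "b \<le> 4 * exp (b / 4)"
    using exp_ge_add_one_self[of "b / 4"] by linarith
  have "a * b \<le> exp (b / 4) * (4 * exp (b / 4))"
    using a b a1 b1 by (intro mult_mono) auto
  also have "\<dots> = 4 * exp (b / 2)"
    by (simp add: exp_add[symmetric])
  also have "\<dots> \<le> 4 * (Mlog a + exp (b / 2))"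
    using Mlog_nonneg[OF a] by simp
  finally show ?thesis .
qed


lemma single_le_suminf_ennreal: "(f k :: ennreal) \<le> (\<Sum>i. f i)"
  using sum_le_suminf[of f "{k}"] by (simp add: summableI)

lemma weight_pt:
  fixes t :: "'a::euclidean_space"
  assumes t: "norm t < 1"
  obtains k where "norm t \<le> (1/2)^k" "sqrt (1 + inverse (norm t)) \<le> 2 * sqrt 2 ^ k"
proof (cases "t = 0")
  case True
  then show ?thesis by (intro that[of 0]) auto
next
  case False
  then have tp: "0 < norm t" by simp
  have "\<exists>n. (1/2::real)^n < norm t" using real_arch_pow_inv[OF tp] by simp
  then obtain n where n1: "(1/2::real)^n < norm t" and n2: "\<And>m. m < n \<Longrightarrow> \<not> (1/2::real)^m < norm t"
    unfolding exists_least_iff[of "\<lambda>n. (1/2::real)^n < norm t"] by blast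
  have "n \<noteq> 0" using n1 t by (cases n) auto
  then obtain k where nk: "n = Suc k" by (cases n) auto
  have k1: "norm t \<le> (1/2)^k" using n2[of k] nk by auto
  have "inverse (norm t) < inverse ((1/2::real)^n)"
    using n1 by (intro less_imp_inverse_less) auto
  also have "\<dots> = 2 * 2^k" by (simp add: nk power_one_over)
  finally have "1 + inverse (norm t) \<le> 4 * 2^k" by (smt (verit) one_le_power)
  also have "\<dots> = (2 * sqrt 2 ^ k)^2"
    by (simp add: power_mult_distrib power_mult[symmetric] mult.commute[of k 2] power_mult)
  finally have "sqrt (1 + inverse (norm t)) \<le> sqrt ((2 * sqrt 2 ^ k)^2)"
    by (rule real_sqrt_le_mono)
  also have "\<dots> = 2 * sqrt 2 ^ k" by (simp only: real_sqrt_abs) simp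
  finally show ?thesis using k1 that by blast
qed


lemma weight_finite:
  "(\<integral>\<^sup>+ t. ennreal (indicator (ball 0 1) t * sqrt (1 + inverse (norm t))) \<partial>(lebesgue :: 'a::euclidean_space measure)) < \<infinity>"
proof -
  define V where "V = unit_ball_vol (real DIM('a))"
  have V0: "0 \<le> V" unfolding V_def by simp
  define g where "g k t = ennreal (2 * sqrt 2 ^ k) * indicator (cball (0::'a) ((1/2)^k)) t" for k t
  have pt: "ennreal (indicator (ball 0 1) t * sqrt (1 + inverse (norm t))) \<le> (\<Sum>k. g k t)" for t
  proof (cases "t \<in> ball 0 1")
    case False then show ?thesis by simp
  next
    case True
    then obtain k where k1: "norm t \<le> (1/2)^k" and k2: "sqrt (1 + inverse (norm t)) \<le> 2 * sqrt 2 ^ k"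
      using weight_pt[of t] by auto
    have "ennreal (indicator (ball 0 1) t * sqrt (1 + inverse (norm t))) \<le> g k t"
      using True k1 k2 by (simp add: g_def)
    also have "\<dots> \<le> (\<Sum>k. g k t)" by (rule single_le_suminf_ennreal)
    finally show ?thesis .
  qed
  have gm: "g k \<in> borel_measurable lebesgue" for k
    unfolding g_def by (intro borel_measurable_times_ennreal measurable_const borel_measurable_indicator) auto
  have gi: "(\<integral>\<^sup>+t. g k t \<partial>lebesgue) \<le> ennreal (2 * V * (sqrt 2 / 2)^k)" for k
  proof -
    have "(\<integral>\<^sup>+t. g k t \<partial>lebesgue) = ennreal (2 * sqrt 2 ^ k) * emeasure lebesgue (cball (0::'a) ((1/2)^k))"
      unfolding g_def by (rule nn_integral_cmult_indicator) auto
    also have "emeasure lebesgue (cball (0::'a) ((1/2)^k)) = emeasure lborel (cball (0::'a) ((1/2)^k))"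
      by simp
    also have "\<dots> = ennreal (V * ((1/2)^k)^DIM('a))"
      unfolding V_def by (rule emeasure_cball) simp
    also have "ennreal (2 * sqrt 2 ^ k) * ennreal (V * ((1/2)^k)^DIM('a)) = ennreal (2 * sqrt 2 ^ k * (V * ((1/2)^k)^DIM('a)))"
      using V0 by (simp add: ennreal_mult)
    also have "\<dots> \<le> ennreal (2 * V * (sqrt 2 / 2)^k)"
    proof (rule ennreal_leI)
      have "((1/2::real)^k)^DIM('a) \<le> (1/2)^k"
        by (rule power_decreasing[of 1, simplified]) (auto simp: DIM_positive Suc_le_eq power_le_one)
      then have "2 * sqrt 2 ^ k * (V * ((1/2)^k)^DIM('a)) \<le> 2 * sqrt 2 ^ k * (V * (1/2)^k)"
        using V0 by (intro mult_left_mono) auto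
      also have "\<dots> = 2 * V * (sqrt 2 / 2)^k"
        by (simp add: power_divide field_simps)
      finally show "2 * sqrt 2 ^ k * (V * ((1/2)^k)^DIM('a)) \<le> 2 * V * (sqrt 2 / 2)^k" .
    qed
    finally show ?thesis .
  qed
  have q: "\<bar>sqrt 2 / 2\<bar> < (1::real)"
    using sqrt2_less_2 by simp
  have summ: "summable (\<lambda>k. 2 * V * (sqrt 2 / 2)^k)"
    using q by (intro summable_mult summable_geometric) (simp only: real_norm_def)
  have "(\<integral>\<^sup>+ t. ennreal (indicator (ball 0 1) t * sqrt (1 + inverse (norm t))) \<partial>(lebesgue :: 'a measure)) \<le> (\<integral>\<^sup>+ t. (\<Sum>k. g k t) \<partial>lebesgue)"
    by (rule nn_integral_mono) (rule pt)
  also have "\<dots> = (\<Sum>k. \<integral>\<^sup>+t. g k t \<partial>lebesgue)"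
    by (rule nn_integral_suminf[OF gm])
  also have "\<dots> \<le> (\<Sum>k. ennreal (2 * V * (sqrt 2 / 2)^k))"
    by (intro suminf_le gi) (auto simp: summableI)
  also have "\<dots> = ennreal (\<Sum>k. 2 * V * (sqrt 2 / 2)^k)"
    using V0 summ by (intro suminf_ennreal2) auto
  also have "\<dots> < \<infinity>" by simp
  finally show ?thesis .
qed


lemma exp_half_ln: "0 < x \<Longrightarrow> exp (ln x / 2) = sqrt x"
  by (simp add: powr_half_sqrt[symmetric] powr_def)

lemma core_bound:
  fixes f :: "'a::euclidean_space \<Rightarrow> real" and r :: real
  assumes f0m: "(\<lambda>s. indicator (-ball 0 1) s * f s) \<in> borel_measurable lebesgue"
    and r: "r > 0"
    and R: "(\<integral>\<^sup>+ x \<in> ball 0 1. ennreal (Mlog (\<bar>Vop f x\<bar> / r)) \<partial>(lebesgue :: 'a measure)) \<le> 1"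
  shows "(\<integral>\<^sup>+t. ennreal (indicator (ball 0 1) t * (\<bar>Vop f t\<bar> * ln (1 + inverse (norm t)))) \<partial>(lebesgue :: 'a measure))
    \<le> ennreal (4 * r) * (1 + (\<integral>\<^sup>+ t. ennreal (indicator (ball 0 1) t * sqrt (1 + inverse (norm t))) \<partial>(lebesgue :: 'a measure)))"
proof -
  define f0 where "f0 s = indicator (-ball 0 1) s * f s" for s :: 'a
  have f0m': "f0 \<in> borel_measurable lebesgue" using f0m by (simp add: f0_def[abs_def])
  define V0 where "V0 t = norm t powr (-2 * real DIM('a)) * f0 (ivt t)" for t :: 'a
  have V0m: "V0 \<in> borel_measurable lebesgue"
    unfolding V0_def[abs_def] by (intro borel_measurable_times meas_norm_powr meas_ivt f0m')
  have VV0: "indicator (ball 0 1) t * \<bar>Vop f t\<bar> = indicator (ball 0 1) t * \<bar>V0 t\<bar>" for t :: 'a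
  proof (cases "t \<in> ball 0 1 \<and> t \<noteq> 0")
    case True
    then have "1 < inverse (norm t)" by (intro one_less_inverse) auto
    then have "ivt t \<notin> ball 0 1"
      by (auto simp: norm_ivt)
    then show ?thesis by (simp add: Vop_def V0_def f0_def ivt_def)
  next
    case False
    then show ?thesis by (auto simp: Vop_def V0_def)
  qed
  have Mm: "(\<lambda>t. ennreal (indicator (ball 0 1) t * Mlog (\<bar>V0 t\<bar> / r))) \<in> borel_measurable lebesgue"
  proof -
    have Mb: "Mlog \<in> borel_measurable borel" unfolding Mlog_def[abs_def] by measurable
    have "(\<lambda>t. \<bar>V0 t\<bar> / r) \<in> borel_measurable lebesgue"
      using V0m by (intro borel_measurable_divide borel_measurable_abs measurable_const) auto
    then have "(\<lambda>t. Mlog (\<bar>V0 t\<bar> / r)) \<in> borel_measurable lebesgue"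
      using measurable_compose[OF _ Mb] by blast
    then show ?thesis
      by (intro measurable_compose[OF _ measurable_ennreal] borel_measurable_times borel_measurable_indicator) auto
  qed
  have Sm: "(\<lambda>t. ennreal (indicator (ball 0 1) t * sqrt (1 + inverse (norm t)))) \<in> borel_measurable (lebesgue :: 'a measure)"
  proof -
    have "(\<lambda>x::'a. sqrt (1 + inverse (norm x))) \<in> borel_measurable borel" by measurable
    then have "(\<lambda>x::'a. sqrt (1 + inverse (norm x))) \<in> borel_measurable lebesgue"
      by (intro measurable_completion) simp
    then show ?thesis
      by (intro measurable_compose[OF _ measurable_ennreal] borel_measurable_times borel_measurable_indicator) auto
  qed
  have M1: "(\<integral>\<^sup>+t. ennreal (indicator (ball 0 1) t * Mlog (\<bar>V0 t\<bar> / r)) \<partial>(lebesgue :: 'a measure)) \<le> 1"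
  proof -
    have "(\<integral>\<^sup>+t. ennreal (indicator (ball 0 1) t * Mlog (\<bar>V0 t\<bar> / r)) \<partial>(lebesgue :: 'a measure))
        = (\<integral>\<^sup>+ x \<in> ball 0 1. ennreal (Mlog (\<bar>Vop f x\<bar> / r)) \<partial>(lebesgue :: 'a measure))"
    proof (rule nn_integral_cong)
      fix t :: 'a
      show "ennreal (indicator (ball 0 1) t * Mlog (\<bar>V0 t\<bar> / r)) = ennreal (Mlog (\<bar>Vop f t\<bar> / r)) * indicator (ball 0 1) t"
        using VV0[of t] by (cases "t \<in> ball 0 1") auto
    qed
    then show ?thesis using R by simp
  qed
  have pt: "ennreal (indicator (ball 0 1) t * (\<bar>Vop f t\<bar> * ln (1 + inverse (norm t))))
     \<le> ennreal (4 * r) * (ennreal (indicator (ball 0 1) t * Mlog (\<bar>V0 t\<bar> / r)) + ennreal (indicator (ball 0 1) t * sqrt (1 + inverse (norm t))))" for t :: 'a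
  proof (cases "t \<in> ball 0 1")
    case False then show ?thesis by simp
  next
    case True
    have Vt: "\<bar>Vop f t\<bar> = \<bar>V0 t\<bar>" using VV0[of t] True by simp
    define a where "a = \<bar>V0 t\<bar> / r"
    define b where "b = ln (1 + inverse (norm t))"
    have a0: "0 \<le> a" using r by (simp add: a_def)
    have b0: "0 \<le> b" by (simp add: b_def)
    have eb: "exp (b / 2) = sqrt (1 + inverse (norm t))"
      unfolding b_def by (rule exp_half_ln) (simp add: add_pos_nonneg)
    have "\<bar>Vop f t\<bar> * ln (1 + inverse (norm t)) = r * (a * b)"
      using r by (simp add: Vt a_def b_def)
    also have "\<dots> \<le> r * (4 * (Mlog a + exp (b / 2)))"
      using young[OF a0 b0] r by (intro mult_left_mono) auto
    also have "\<dots> = 4 * r * (Mlog a + sqrt (1 + inverse (norm t)))"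
      by (simp add: eb)
    finally have "ennreal (\<bar>Vop f t\<bar> * ln (1 + inverse (norm t))) \<le> ennreal (4 * r * (Mlog a + sqrt (1 + inverse (norm t))))"
      by (rule ennreal_leI)
    also have "\<dots> = ennreal (4 * r) * (ennreal (Mlog a) + ennreal (sqrt (1 + inverse (norm t))))"
      using r Mlog_nonneg[OF a0] by (simp add: ennreal_mult ennreal_plus)
    finally show ?thesis using True by (simp add: a_def)
  qed
  have "(\<integral>\<^sup>+t. ennreal (indicator (ball 0 1) t * (\<bar>Vop f t\<bar> * ln (1 + inverse (norm t)))) \<partial>(lebesgue :: 'a measure))
     \<le> (\<integral>\<^sup>+t. ennreal (4 * r) * (ennreal (indicator (ball 0 1) t * Mlog (\<bar>V0 t\<bar> / r)) + ennreal (indicator (ball 0 1) t * sqrt (1 + inverse (norm t)))) \<partial>(lebesgue :: 'a measure))"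
    by (rule nn_integral_mono) (rule pt)
  also have "\<dots> = ennreal (4 * r) * ((\<integral>\<^sup>+t. ennreal (indicator (ball 0 1) t * Mlog (\<bar>V0 t\<bar> / r)) \<partial>(lebesgue :: 'a measure)) + (\<integral>\<^sup>+ t. ennreal (indicator (ball 0 1) t * sqrt (1 + inverse (norm t))) \<partial>(lebesgue :: 'a measure)))"
    using Mm Sm by (subst nn_integral_cmult) (auto intro: borel_measurable_add simp: nn_integral_add)
  also have "\<dots> \<le> ennreal (4 * r) * (1 + (\<integral>\<^sup>+ t. ennreal (indicator (ball 0 1) t * sqrt (1 + inverse (norm t))) \<partial>(lebesgue :: 'a measure)))"
    using M1 by (intro mult_left_mono add_right_mono) auto
  finally show ?thesis .
qed


lemma lhs_bound:
  fixes f :: "'a::euclidean_space \<Rightarrow> real"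
  assumes fm: "f \<in> borel_measurable (lebesgue_on (- ball 0 1))"
  shows "(\<integral>\<^sup>+ s \<in> - ball 0 1. ennreal (\<bar>f s\<bar> * ln (1 + norm s)) \<partial>lebesgue)
    \<le> (\<integral>\<^sup>+t. ennreal (indicator (ball 0 1) t * (\<bar>Vop f t\<bar> * ln (1 + inverse (norm t)))) \<partial>(lebesgue :: 'a measure))"
proof -
  define f0 where "f0 s = indicator (-ball 0 1) s * f s" for s :: 'a
  have f0m: "f0 \<in> borel_measurable lebesgue"
    using fm unfolding f0_def[abs_def]
    by (subst (asm) borel_measurable_restrict_space_iff) auto
  define h where "h s = \<bar>f0 s\<bar> * ln (1 + norm s)" for s :: 'a
  have h0: "0 \<le> h s" for s by (simp add: h_def)
  have hm: "h \<in> borel_measurable lebesgue"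
  proof -
    have "(\<lambda>s::'a. ln (1 + norm s)) \<in> borel_measurable borel" by measurable
    then have "(\<lambda>s::'a. ln (1 + norm s)) \<in> borel_measurable lebesgue"
      by (intro measurable_completion) simp
    then show ?thesis unfolding h_def[abs_def]
      using f0m by (intro borel_measurable_times borel_measurable_abs)
  qed
  have "(\<integral>\<^sup>+ s \<in> - ball 0 1. ennreal (\<bar>f s\<bar> * ln (1 + norm s)) \<partial>lebesgue)
      = (\<integral>\<^sup>+s. ennreal (indicator (-ball 0 1) s * h s) \<partial>(lebesgue :: 'a measure))"
    by (rule nn_integral_cong) (auto simp: h_def f0_def indicator_def)
  also have "\<dots> \<le> (\<integral>\<^sup>+t. ennreal (indicator (cball 0 1 - {0}) t * (norm t powr (-2 * real DIM('a)) * h (ivt t))) \<partial>lebesgue)"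
    by (rule covA[OF h0 hm])
  also have "\<dots> \<le> (\<integral>\<^sup>+t. ennreal (indicator (ball 0 1) t * (\<bar>Vop f t\<bar> * ln (1 + inverse (norm t)))) \<partial>lebesgue)"
  proof (rule nn_integral_mono_AE)
    have "sphere (0::'a) 1 \<in> null_sets lebesgue"
      using negligible_sphere negligible_iff_null_sets by blast
    then have "AE t in (lebesgue :: 'a measure). t \<notin> sphere 0 1" by (rule AE_not_in)
    then show "AE t in lebesgue. ennreal (indicator (cball 0 1 - {0}) t * (norm t powr (-2 * real DIM('a)) * h (ivt t)))
        \<le> ennreal (indicator (ball 0 1) t * (\<bar>Vop f t\<bar> * ln (1 + inverse (norm t))))"
    proof (rule AE_mp, intro AE_I2 impI)
      fix t :: 'a assume ts: "t \<notin> sphere 0 1"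
      show "ennreal (indicator (cball 0 1 - {0}) t * (norm t powr (-2 * real DIM('a)) * h (ivt t)))
        \<le> ennreal (indicator (ball 0 1) t * (\<bar>Vop f t\<bar> * ln (1 + inverse (norm t))))"
      proof (cases "t \<in> cball 0 1 - {0}")
        case False then show ?thesis by simp
      next
        case True
        then have tb: "t \<in> ball 0 1" and t0: "t \<noteq> 0" using ts by auto
        then have "1 < inverse (norm t)" by (intro one_less_inverse) auto
        then have "ivt t \<notin> ball 0 1" by (auto simp: norm_ivt)
        then have "h (ivt t) = \<bar>f (ivt t)\<bar> * ln (1 + inverse (norm t))"
          by (simp add: h_def f0_def norm_ivt)
        then have "norm t powr (-2 * real DIM('a)) * h (ivt t) = \<bar>Vop f t\<bar> * ln (1 + inverse (norm t))"
          by (simp add: Vop_def ivt_def abs_mult)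
        then show ?thesis using True tb by simp
      qed
    qed
  qed
  finally show ?thesis .
qed

theorem lemmaA3:
  "\<exists>c::real. c > 0 \<and>
     (\<forall>f :: 'a::euclidean_space \<Rightarrow> real.
        f \<in> borel_measurable (lebesgue_on (- ball 0 1)) \<longrightarrow>
        (\<integral>\<^sup>+ s \<in> - ball 0 1. ennreal (\<bar>f s\<bar> * ln (1 + norm s)) \<partial>lebesgue)
          \<le> ennreal c * luxemburg_norm Mlog (ball 0 1) (Vop f))"
proof -
  define K where "K = (\<integral>\<^sup>+ t. ennreal (indicator (ball 0 1) t * sqrt (1 + inverse (norm t))) \<partial>(lebesgue :: 'a measure))"
  have Kfin: "K < \<infinity>" unfolding K_def by (rule weight_finite)
  define c where "c = 4 * (1 + enn2real K)"
  have c0: "c > 0" unfolding c_def by (simp add: add_pos_nonneg)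
  have K_eq: "ennreal (enn2real K) = K" using Kfin by simp
  show ?thesis
  proof (intro exI conjI allI impI)
    show "c > 0" by (rule c0)
    fix f :: "'a \<Rightarrow> real"
    assume fm: "f \<in> borel_measurable (lebesgue_on (- ball 0 1))"
    define L where "L = (\<integral>\<^sup>+ s \<in> - ball 0 1. ennreal (\<bar>f s\<bar> * ln (1 + norm s)) \<partial>lebesgue)"
    define R where "R = {r::real. r > 0 \<and> (\<integral>\<^sup>+ x \<in> ball 0 1. ennreal (Mlog (\<bar>Vop f x\<bar> / r)) \<partial>lebesgue) \<le> 1}"
    define I where "I = (INF r \<in> R. ennreal r)"
    have f0m: "(\<lambda>s. indicator (-ball 0 1) s * f s) \<in> borel_measurable lebesgue"
      using fm by (subst (asm) borel_measurable_restrict_space_iff) auto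
    have Lr: "L \<le> ennreal (c * r)" if "r \<in> R" for r
    proof -
      have r: "r > 0" and Rr: "(\<integral>\<^sup>+ x \<in> ball 0 1. ennreal (Mlog (\<bar>Vop f x\<bar> / r)) \<partial>lebesgue) \<le> 1"
        using that by (auto simp: R_def)
      have "L \<le> ennreal (4 * r) * (1 + K)"
        unfolding L_def K_def using lhs_bound[OF fm] core_bound[OF f0m r Rr] by (rule order_trans)
      also have "\<dots> = ennreal (c * r)"
      proof -
        have "1 + K = ennreal (1 + enn2real K)"
          by (subst ennreal_plus) (auto simp: K_eq)
        then have "ennreal (4 * r) * (1 + K) = ennreal (4 * r * (1 + enn2real K))"
          using r by (simp add: ennreal_mult)
        then show ?thesis by (simp add: c_def mult_ac)
      qed
      finally show ?thesis .
    qed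
    have "L \<le> ennreal c * I"
    proof (rule ennreal_le_epsilon)
      fix e :: real assume lt: "ennreal c * I < top" and e: "0 < e"
      have It: "I \<noteq> \<infinity>" using lt c0 by (auto simp: ennreal_mult_top)
      obtain r where rR: "r \<in> R" and rI: "ennreal r < I + ennreal (e / c)"
        using INF_approx_ennreal[of "e / c" I ennreal R] e c0 It I_def by auto
      have "L \<le> ennreal (c * r)" by (rule Lr[OF rR])
      also have "\<dots> = ennreal c * ennreal r"
        using c0 rR by (intro ennreal_mult) (auto simp: R_def)
      also have "\<dots> \<le> ennreal c * (I + ennreal (e / c))"
        using rI by (intro mult_left_mono) auto
      also have "\<dots> = ennreal c * I + ennreal e"
      proof -
        have "ennreal c * ennreal (e / c) = ennreal (c * (e / c))"
          using c0 e by (intro ennreal_mult[symmetric]) auto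
        also have "\<dots> = ennreal e" using c0 by simp
        finally show ?thesis by (simp add: distrib_left)
      qed
      finally show "L \<le> ennreal c * I + ennreal e" .
    qed
    then show "(\<integral>\<^sup>+ s \<in> - ball 0 1. ennreal (\<bar>f s\<bar> * ln (1 + norm s)) \<partial>lebesgue)
          \<le> ennreal c * luxemburg_norm Mlog (ball 0 1) (Vop f)"
      unfolding L_def I_def R_def luxemburg_norm_def .
  qed
qed

end
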